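(* Let $\Gamma$ be a finite simplicial graph with property (B2): for all $v,w\in V(\Gamma)$ with $v\le w$ there exists $u\in V(\Gamma)$, $u\ne v,w$, with $v\le u\le w$. Let $v,w\in V(\Gamma)$ be distinct with $v\le w$, and let $t_{vw}$ be the corresponding transvection. Then for every integer $m\ge 0$, $t_{vw}^{m^2}\in\mathrm{S}\mathcal{I}A'_\Gamma(m)$.
   Context: $n=|V(\Gamma)|$. For $v\in V(\Gamma)$, $\mathrm{lk}(v)$ is the set of vertices adjacent to $v$ and $\mathrm{st}(v)=\mathrm{lk}(v)\cup\{v\}$; $v\le w$ iff $\mathrm{lk}(v)\subset\mathrm{st}(w)$. $A_\Gamma=\langle V(\Gamma)\mid [u,v]=1 \text{ whenever } u,v \text{ adjacent}\rangle$. Transvection: for distinct $v,w$ with $v\le w$, $t_{vw}$ maps $v\mapsto vw$, fixing other vertices; partial conjugation $c_{v,Y}$ ($Y$ a connected component of $\Gamma-\mathrm{st}(v)$) maps $x\mapsto v^{-1}xv$ for $x\in Y$, fixing others. $\mathrm{SAut}^0(A_\Gamma)$ is generated by transvections and partial conjugations; $\mathrm{S}\mathcal{I}A_\Gamma(m)$ is the kernel of $\mathrm{SAut}^0(A_\Gamma)\to\mathrm{SL}(n,\mathbb{Z})\to\mathrm{SL}(n,\mathbb{Z}/m\mathbb{Z})$ (action on $H_1(A_\Gamma;\mathbb Z)=\mathbb Z^n$, then reduction mod $m$), and $\mathrm{S}\mathcal{I}A'_\Gamma(m)$ denotes its commutator subgroup. *)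

theory Defs
  imports "HOL-Algebra.Algebra" "HOL-Number_Theory.Cong"
begin

text \<open>A finite simplicial graph: vertices form the finite type 'v, E is the
  (symmetric, irreflexive) adjacency relation.\<close>

definition simplicial_graph :: "('v \<Rightarrow> 'v \<Rightarrow> bool) \<Rightarrow> bool" where
  "simplicial_graph E \<longleftrightarrow> (\<forall>u v. E u v \<longrightarrow> E v u) \<and> (\<forall>u. \<not> E u u)"

definition lk :: "('v \<Rightarrow> 'v \<Rightarrow> bool) \<Rightarrow> 'v \<Rightarrow> 'v set" where
  "lk E v = {u. E v u}"

definition st :: "('v \<Rightarrow> 'v \<Rightarrow> bool) \<Rightarrow> 'v \<Rightarrow> 'v set" where
  "st E v = insert v (lk E v)"

definition dom_le :: "('v \<Rightarrow> 'v \<Rightarrow> bool) \<Rightarrow> 'v \<Rightarrow> 'v \<Rightarrow> bool" where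
  "dom_le E v w \<longleftrightarrow> lk E v \<subseteq> st E w"

definition property_B2 :: "('v \<Rightarrow> 'v \<Rightarrow> bool) \<Rightarrow> bool" where
  "property_B2 E \<longleftrightarrow> (\<forall>v w. v \<noteq> w \<and> dom_le E v w \<longrightarrow>
      (\<exists>u. u \<noteq> v \<and> u \<noteq> w \<and> dom_le E v u \<and> dom_le E u w))"

text \<open>Words in the generators and their inverses: (a, True) = a, (a, False) = a^-1.\<close>

type_synonym 'v word = "('v \<times> bool) list"

definition raag_step :: "('v \<Rightarrow> 'v \<Rightarrow> bool) \<Rightarrow> ('v word \<times> 'v word) set" where
  "raag_step E =
     {(xs @ [(a, b), (a, \<not> b)] @ ys, xs @ ys) | xs ys a b. True} \<union>
     {(xs @ [(a, b), (c, d)] @ ys, xs @ [(c, d), (a, b)] @ ys) | xs ys a b c d. E a c}"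

definition raag_rel :: "('v \<Rightarrow> 'v \<Rightarrow> bool) \<Rightarrow> ('v word \<times> 'v word) set" where
  "raag_rel E = (raag_step E \<union> converse (raag_step E))\<^sup>*"

definition raag_class :: "('v \<Rightarrow> 'v \<Rightarrow> bool) \<Rightarrow> 'v word \<Rightarrow> 'v word set" where
  "raag_class E x = raag_rel E `` {x}"

definition raag_mult :: "('v \<Rightarrow> 'v \<Rightarrow> bool) \<Rightarrow> 'v word set \<Rightarrow> 'v word set \<Rightarrow> 'v word set" where
  "raag_mult E P Q = {z. \<exists>x\<in>P. \<exists>y\<in>Q. (x @ y, z) \<in> raag_rel E}"

definition RAAG :: "('v \<Rightarrow> 'v \<Rightarrow> bool) \<Rightarrow> 'v word set monoid" where
  "RAAG E = \<lparr> carrier = UNIV // raag_rel E,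
              monoid.mult = raag_mult E,
              one = raag_class E [] \<rparr>"

definition inv_word :: "'v word \<Rightarrow> 'v word" where
  "inv_word xs = rev (map (\<lambda>(a, b). (a, \<not> b)) xs)"

definition subst_word :: "('v \<Rightarrow> 'v word) \<Rightarrow> 'v word \<Rightarrow> 'v word" where
  "subst_word \<sigma> xs = concat (map (\<lambda>(a, b). if b then \<sigma> a else inv_word (\<sigma> a)) xs)"

definition raag_endo :: "('v \<Rightarrow> 'v \<Rightarrow> bool) \<Rightarrow> ('v \<Rightarrow> 'v word) \<Rightarrow> 'v word set \<Rightarrow> 'v word set" where
  "raag_endo E \<sigma> = (\<lambda>P \<in> carrier (RAAG E). {z. \<exists>x\<in>P. (subst_word \<sigma> x, z) \<in> raag_rel E})"

definition transvection :: "('v \<Rightarrow> 'v \<Rightarrow> bool) \<Rightarrow> 'v \<Rightarrow> 'v \<Rightarrow> 'v word set \<Rightarrow> 'v word set" where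
  "transvection E v w =
     raag_endo E (\<lambda>u. if u = v then [(v, True), (w, True)] else [(u, True)])"

definition components_off_star :: "('v \<Rightarrow> 'v \<Rightarrow> bool) \<Rightarrow> 'v \<Rightarrow> 'v set set" where
  "components_off_star E v =
     (UNIV - st E v) // ({(a, b). E a b \<and> a \<notin> st E v \<and> b \<notin> st E v}\<^sup>*)"

definition partial_conj :: "('v \<Rightarrow> 'v \<Rightarrow> bool) \<Rightarrow> 'v \<Rightarrow> 'v set \<Rightarrow> 'v word set \<Rightarrow> 'v word set" where
  "partial_conj E v C =
     raag_endo E (\<lambda>u. if u \<in> C then [(v, False), (u, True), (v, True)] else [(u, True)])"

definition SAut0 :: "('v \<Rightarrow> 'v \<Rightarrow> bool) \<Rightarrow> ('v word set \<Rightarrow> 'v word set) set" where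
  "SAut0 E = generate (AutoGroup (RAAG E))
     ({transvection E v w | v w. v \<noteq> w \<and> dom_le E v w} \<union>
      {partial_conj E v C | v C. C \<in> components_off_star E v})"

definition expsum :: "'v \<Rightarrow> 'v word \<Rightarrow> int" where
  "expsum u xs = int (length (filter (\<lambda>l. l = (u, True)) xs))
               - int (length (filter (\<lambda>l. l = (u, False)) xs))"

definition expsum_cls :: "'v \<Rightarrow> 'v word set \<Rightarrow> int" where
  "expsum_cls u P = expsum u (SOME x. x \<in> P)"

text \<open>Matrix of the action of phi on H_1(A_Gamma;Z) = Z^n: entry (x,y) is the
  y-coordinate of the image of the generator x.\<close>
definition H1_matrix :: "('v \<Rightarrow> 'v \<Rightarrow> bool) \<Rightarrow> ('v word set \<Rightarrow> 'v word set) \<Rightarrow> 'v \<Rightarrow> 'v \<Rightarrow> int" where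
  "H1_matrix E \<phi> x y = expsum_cls y (\<phi> (raag_class E [(x, True)]))"

text \<open>SIA_Gamma(m): kernel of SAut^0 \<rightarrow> SL(n,Z) \<rightarrow> SL(n,Z/mZ).\<close>
definition SIA :: "('v \<Rightarrow> 'v \<Rightarrow> bool) \<Rightarrow> nat \<Rightarrow> ('v word set \<Rightarrow> 'v word set) set" where
  "SIA E m = {\<phi> \<in> SAut0 E. \<forall>x y. [H1_matrix E \<phi> x y = (if x = y then 1 else 0)] (mod int m)}"

definition SIA' :: "('v \<Rightarrow> 'v \<Rightarrow> bool) \<Rightarrow> nat \<Rightarrow> ('v word set \<Rightarrow> 'v word set) set" where
  "SIA' E m = derived (AutoGroup (RAAG E)) (SIA E m)"

end

theory Submission
  imports Defs
begin

lemma inv_word_Nil[simp]: "inv_word [] = []"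
  by (simp add: inv_word_def)
lemma inv_word_Cons[simp]: "inv_word ((a,b)#x) = inv_word x @ [(a, \<not> b)]"
  by (simp add: inv_word_def)
lemma inv_word_append[simp]: "inv_word (x@y) = inv_word y @ inv_word x"
  by (simp add: inv_word_def)
lemma inv_word_Cons'[simp]: "inv_word (l#x) = inv_word x @ [(fst l, \<not> snd l)]"
  by (cases l) simp
lemma inv_word_inv_word[simp]: "inv_word (inv_word x) = x"
  by (induction x) auto
lemma fst_inv_word[simp]: "fst ` set (inv_word x) = fst ` set x"
  by (simp add: inv_word_def image_image case_prod_beta)

locale raag =
  fixes E :: "'v \<Rightarrow> 'v \<Rightarrow> bool"
  assumes symE: "E a b \<Longrightarrow> E b a"
begin

abbreviation R where "R \<equiv> raag_rel E"
abbreviation cls where "cls \<equiv> raag_class E"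
abbreviation G where "G \<equiv> RAAG E"

lemma step_cancelI: "(xs @ [(a,b),(a,\<not>b)] @ ys, xs @ ys) \<in> raag_step E"
  unfolding raag_step_def
  by (rule UnI1, rule CollectI, rule exI[of _ xs], rule exI[of _ ys], rule exI[of _ a], rule exI[of _ b]) simp

lemma step_swapI: "E a c \<Longrightarrow> (xs @ [(a,b),(c,d)] @ ys, xs @ [(c,d),(a,b)] @ ys) \<in> raag_step E"
  unfolding raag_step_def
  by (rule UnI2, rule CollectI, rule exI[of _ xs], rule exI[of _ ys], rule exI[of _ a], rule exI[of _ b],
      rule exI[of _ c], rule exI[of _ d]) simp

lemma step_ctx: "(x,y) \<in> raag_step E \<Longrightarrow> (p@x@q, p@y@q) \<in> raag_step E"
proof -
  assume "(x,y) \<in> raag_step E"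
  then consider (c) xs ys a b where "x = xs @ [(a, b), (a, \<not> b)] @ ys" "y = xs @ ys"
    | (s) xs ys a b c d where "x = xs @ [(a, b), (c,d)] @ ys" "y = xs @ [(c,d),(a,b)] @ ys" "E a c"
    unfolding raag_step_def by blast
  then show ?thesis
  proof cases
    case c
    then show ?thesis using step_cancelI[of "p@xs" a b "ys@q"] by simp
  next
    case s
    then show ?thesis using step_swapI[of a c "p@xs" b d "ys@q"] by simp
  qed
qed

lemma R_ctx: "(x,y) \<in> R \<Longrightarrow> (p@x@q, p@y@q) \<in> R"
  unfolding raag_rel_def
proof (induction rule: rtrancl_induct)
  case base then show ?case by simp
next
  case (step y z)
  then have "(p@y@q, p@z@q) \<in> raag_step E \<union> (raag_step E)\<inverse>"
    using step_ctx by blast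
  then show ?case by (rule rtrancl_into_rtrancl[OF step.IH])
qed

lemma R_refl[simp]: "(x,x) \<in> R"
  unfolding raag_rel_def by simp

lemma R_sym: "(x,y) \<in> R \<Longrightarrow> (y,x) \<in> R"
proof -
  have "sym (raag_step E \<union> (raag_step E)\<inverse>)" by (rule sym_Un_converse)
  then have "sym R" unfolding raag_rel_def by (rule sym_rtrancl)
  then show "(x,y) \<in> R \<Longrightarrow> (y,x) \<in> R" by (rule symD)
qed

lemma R_trans: "(x,y) \<in> R \<Longrightarrow> (y,z) \<in> R \<Longrightarrow> (x,z) \<in> R"
  unfolding raag_rel_def by (rule rtrancl_trans)

lemma R_app: "(x,x') \<in> R \<Longrightarrow> (y,y') \<in> R \<Longrightarrow> (x@y, x'@y') \<in> R"
proof -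
  assume a: "(x,x') \<in> R" "(y,y') \<in> R"
  have "(x@y, x'@y) \<in> R" using R_ctx[OF a(1), of "[]" y] by simp
  moreover have "(x'@y, x'@y') \<in> R" using R_ctx[OF a(2), of x' "[]"] by simp
  ultimately show ?thesis by (rule R_trans)
qed

lemma R_app3: "(x,x') \<in> R \<Longrightarrow> (y,y') \<in> R \<Longrightarrow> (z,z') \<in> R \<Longrightarrow> (x@y@z, x'@y'@z') \<in> R"
  by (intro R_app)

lemma R_cancel: "(p @ [(a,b),(a,\<not>b)] @ q, p @ q) \<in> R"
  unfolding raag_rel_def using step_cancelI by blast

lemma R_swap: "E a c \<Longrightarrow> (p @ [(a,b),(c,d)] @ q, p @ [(c,d),(a,b)] @ q) \<in> R"
  unfolding raag_rel_def using step_swapI by blast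

lemma R_rinv: "(x @ inv_word x, []) \<in> R"
proof (induction x)
  case Nil then show ?case by simp
next
  case (Cons l x)
  obtain a b where l: "l = (a,b)" by force
  have 1: "([(a,b)] @ (x @ inv_word x) @ [(a,\<not>b)], [(a,b)] @ [] @ [(a,\<not>b)]) \<in> R"
    by (rule R_app3[OF R_refl Cons.IH R_refl])
  have 2: "([] @ [(a,b),(a,\<not>b)] @ [], [] @ []) \<in> R" by (rule R_cancel)
  have "((a,b)#x @ inv_word x @ [(a,\<not>b)], []) \<in> R"
    using R_trans[OF 1[simplified] 2[simplified]] by simp
  then show ?case using l by simp
qed

lemma R_linv: "(inv_word x @ x, []) \<in> R"
  using R_rinv[of "inv_word x"] by simp

lemma R_cancel_gen: "(p @ x @ inv_word x @ q, p @ q) \<in> R"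
  using R_app3[OF R_refl R_rinv R_refl, of p x q] by simp

lemma R_cancel_gen': "(p @ inv_word x @ x @ q, p @ q) \<in> R"
  using R_app3[OF R_refl R_linv R_refl, of p x q] by simp

lemma R_inv: "(x,y) \<in> R \<Longrightarrow> (inv_word x, inv_word y) \<in> R"
proof -
  assume xy: "(x,y) \<in> R"
  have "(inv_word x @ [] , inv_word x @ y @ inv_word y) \<in> R"
    using R_app[OF R_refl R_sym[OF R_rinv]] by blast
  moreover have "(inv_word x @ y @ inv_word y, inv_word x @ x @ inv_word y) \<in> R"
    using R_app3[OF R_refl R_sym[OF xy] R_refl] .
  moreover have "(inv_word x @ x @ inv_word y, [] @ inv_word y) \<in> R"
    using R_cancel_gen'[of "[]" x "inv_word y"] by simp
  ultimately show ?thesis using R_trans by (metis append_Nil append_Nil2)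
qed

lemma cls_mem: "z \<in> cls x \<longleftrightarrow> (x,z) \<in> R"
  unfolding raag_class_def by simp

lemma cls_eq: "cls x = cls y \<longleftrightarrow> (x,y) \<in> R"
proof
  assume "cls x = cls y"
  then have "y \<in> cls x" using cls_mem[of y y] by simp
  then show "(x,y) \<in> R" by (simp add: cls_mem)
next
  assume xy: "(x,y) \<in> R"
  show "cls x = cls y"
  proof (rule Set.set_eqI)
    fix z
    have "(x,z) \<in> R \<longleftrightarrow> (y,z) \<in> R"
      using R_trans[OF xy, of z] R_trans[OF R_sym[OF xy], of z] by blast
    then show "z \<in> cls x \<longleftrightarrow> z \<in> cls y" by (simp add: cls_mem)
  qed
qed

lemma carrier_G: "carrier G = range cls"
  unfolding RAAG_def raag_class_def quotient_def by auto

lemma cls_in[simp]: "cls x \<in> carrier G"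
  unfolding carrier_G by simp

lemma carrierE: "P \<in> carrier G \<Longrightarrow> (\<And>x. P = cls x \<Longrightarrow> thesis) \<Longrightarrow> thesis"
  unfolding carrier_G by blast

lemma mult_cls[simp]: "cls x \<otimes>\<^bsub>G\<^esub> cls y = cls (x@y)"
proof -
  have "raag_mult E (cls x) (cls y) = cls (x@y)"
  proof (rule Set.set_eqI)
    fix z
    show "z \<in> raag_mult E (cls x) (cls y) \<longleftrightarrow> z \<in> cls (x@y)"
    proof
      assume "z \<in> raag_mult E (cls x) (cls y)"
      then obtain x' y' where "(x, x') \<in> R" "(y,y') \<in> R" "(x'@y', z) \<in> R"
        unfolding raag_mult_def by (auto simp: cls_mem)
      then have "(x@y, z) \<in> R" using R_app R_trans by metis
      then show "z \<in> cls (x@y)" by (simp add: cls_mem)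
    next
      assume "z \<in> cls (x@y)"
      then have "(x@y,z) \<in> R" by (simp add: cls_mem)
      then show "z \<in> raag_mult E (cls x) (cls y)"
        unfolding raag_mult_def using cls_mem[of x x] cls_mem[of y y] by auto
    qed
  qed
  then show ?thesis by (simp add: RAAG_def)
qed

lemma one_G[simp]: "\<one>\<^bsub>G\<^esub> = cls []" by (simp add: RAAG_def)

lemma group_G: "group G"
proof (rule groupI)
  fix x y assume "x \<in> carrier G" "y \<in> carrier G"
  then show "x \<otimes>\<^bsub>G\<^esub> y \<in> carrier G" by (auto elim!: carrierE)
next
  show "\<one>\<^bsub>G\<^esub> \<in> carrier G" by simp
next
  fix x y z assume "x \<in> carrier G" "y \<in> carrier G" "z \<in> carrier G"
  then show "x \<otimes>\<^bsub>G\<^esub> y \<otimes>\<^bsub>G\<^esub> z = x \<otimes>\<^bsub>G\<^esub> (y \<otimes>\<^bsub>G\<^esub> z)" by (auto elim!: carrierE)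
next
  fix x assume "x \<in> carrier G"
  then show "\<one>\<^bsub>G\<^esub> \<otimes>\<^bsub>G\<^esub> x = x" by (auto elim!: carrierE)
next
  fix x assume "x \<in> carrier G"
  then obtain w where x: "x = cls w" by (auto elim!: carrierE)
  have "cls (inv_word w) \<otimes>\<^bsub>G\<^esub> x = \<one>\<^bsub>G\<^esub>"
    using x R_linv cls_eq by simp
  then show "\<exists>y\<in>carrier G. y \<otimes>\<^bsub>G\<^esub> x = \<one>\<^bsub>G\<^esub>" by (intro bexI[of _ "cls (inv_word w)"]) auto
qed

end

definition admissible :: "('v \<Rightarrow> 'v \<Rightarrow> bool) \<Rightarrow> ('v \<Rightarrow> 'v word) \<Rightarrow> bool" where
  "admissible E \<sigma> \<longleftrightarrow> (\<forall>a c. E a c \<longrightarrow> (\<sigma> a @ \<sigma> c, \<sigma> c @ \<sigma> a) \<in> raag_rel E)"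

definition inv_pair :: "('v \<Rightarrow> 'v \<Rightarrow> bool) \<Rightarrow> ('v \<Rightarrow> 'v word) \<Rightarrow> ('v \<Rightarrow> 'v word) \<Rightarrow> bool" where
  "inv_pair E \<sigma> \<tau> \<longleftrightarrow> admissible E \<sigma> \<and> admissible E \<tau> \<and>
     (\<forall>a. (subst_word \<sigma> (\<tau> a), [(a,True)]) \<in> raag_rel E) \<and>
     (\<forall>a. (subst_word \<tau> (\<sigma> a), [(a,True)]) \<in> raag_rel E)"

lemma subst_Nil[simp]: "subst_word \<sigma> [] = []"
  by (simp add: subst_word_def)
lemma subst_Cons[simp]: "subst_word \<sigma> (l#x) = (if snd l then \<sigma> (fst l) else inv_word (\<sigma> (fst l))) @ subst_word \<sigma> x"
  by (simp add: subst_word_def case_prod_beta)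
lemma subst_append[simp]: "subst_word \<sigma> (x@y) = subst_word \<sigma> x @ subst_word \<sigma> y"
  by (simp add: subst_word_def)
lemma subst_inv[simp]: "subst_word \<sigma> (inv_word x) = inv_word (subst_word \<sigma> x)"
  by (induction x) auto
lemma subst_subst: "subst_word \<sigma> (subst_word \<tau> x) = subst_word (\<lambda>a. subst_word \<sigma> (\<tau> a)) x"
  by (induction x) auto
lemma subst_id[simp]: "subst_word (\<lambda>a. [(a,True)]) x = x"
  by (induction x) (auto simp: inv_word_def)
lemma subst_fix: "(\<And>l. l \<in> set x \<Longrightarrow> \<sigma> (fst l) = [(fst l, True)]) \<Longrightarrow> subst_word \<sigma> x = x"
  by (induction x) auto

context raag
begin

abbreviation AG where "AG \<equiv> AutoGroup (RAAG E)"

lemma comm_inv: "(XX@YY, YY@XX) \<in> R \<Longrightarrow> (inv_word XX @ YY, YY @ inv_word XX) \<in> R"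
proof -
  assume h: "(XX@YY, YY@XX) \<in> R"
  have 1: "(inv_word XX @ YY, inv_word XX @ YY @ XX @ inv_word XX) \<in> R"
    using R_sym[OF R_cancel_gen[of "inv_word XX @ YY" XX "[]"]] by simp
  have 2: "(inv_word XX @ (YY @ XX) @ inv_word XX, inv_word XX @ (XX @ YY) @ inv_word XX) \<in> R"
    using R_app3[OF R_refl R_sym[OF h] R_refl] .
  have 3: "(inv_word XX @ XX @ (YY @ inv_word XX), [] @ (YY @ inv_word XX)) \<in> R"
    using R_cancel_gen'[of "[]" XX "YY @ inv_word XX"] by simp
  show ?thesis using R_trans[OF R_trans[OF 1 2[simplified]] 3[simplified]] by simp
qed

lemma letter_comm:
  assumes "(XX@YY, YY@XX) \<in> R"
  shows "((if b then XX else inv_word XX) @ (if d then YY else inv_word YY),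
          (if d then YY else inv_word YY) @ (if b then XX else inv_word XX)) \<in> R"
proof -
  have s: "(YY@XX, XX@YY) \<in> R" using R_sym[OF assms] .
  have a: "(inv_word XX @ YY, YY @ inv_word XX) \<in> R" using comm_inv[OF assms] .
  have b: "(inv_word YY @ XX, XX @ inv_word YY) \<in> R" using comm_inv[OF s] .
  have c: "(inv_word XX @ inv_word YY, inv_word YY @ inv_word XX) \<in> R"
    using comm_inv[OF R_sym[OF b]] by simp
  show ?thesis using assms a b c R_sym by (cases b; cases d) auto
qed

lemma subst_R_step:
  assumes adm: "admissible E \<sigma>" and st: "(x,y) \<in> raag_step E"
  shows "(subst_word \<sigma> x, subst_word \<sigma> y) \<in> R"
proof -
  from st consider (c) xs ys a b where "x = xs @ [(a, b), (a, \<not> b)] @ ys" "y = xs @ ys"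
    | (s) xs ys a b c d where "x = xs @ [(a, b), (c,d)] @ ys" "y = xs @ [(c,d),(a,b)] @ ys" "E a c"
    unfolding raag_step_def by blast
  then show ?thesis
  proof cases
    case c
    have "((if b then \<sigma> a else inv_word (\<sigma> a)) @ (if \<not> b then \<sigma> a else inv_word (\<sigma> a)), []) \<in> R"
      using R_rinv R_linv by (cases b) auto
    then show ?thesis using c R_app3[OF R_refl _ R_refl] by fastforce
  next
    case s
    have "(\<sigma> a @ \<sigma> c, \<sigma> c @ \<sigma> a) \<in> R" using adm s(3) unfolding admissible_def by blast
    from letter_comm[OF this, of b d] show ?thesis using s R_app3[OF R_refl _ R_refl] by fastforce
  qed
qed

lemma subst_R:
  assumes adm: "admissible E \<sigma>" and xy: "(x,y) \<in> R"
  shows "(subst_word \<sigma> x, subst_word \<sigma> y) \<in> R"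
  using xy unfolding raag_rel_def
proof (induction rule: rtrancl_induct)
  case base then show ?case by simp
next
  case (step y z)
  then have "(subst_word \<sigma> y, subst_word \<sigma> z) \<in> R"
    using subst_R_step[OF adm] R_sym by blast
  then show ?case using step.IH R_trans unfolding raag_rel_def by blast
qed

lemma subst_cong:
  assumes "\<And>a. (\<sigma> a, \<tau> a) \<in> R"
  shows "(subst_word \<sigma> x, subst_word \<tau> x) \<in> R"
proof (induction x)
  case Nil then show ?case by simp
next
  case (Cons l x)
  have "((if snd l then \<sigma> (fst l) else inv_word (\<sigma> (fst l))),
         (if snd l then \<tau> (fst l) else inv_word (\<tau> (fst l)))) \<in> R"
    using assms R_inv by auto
  then show ?case using R_app[OF _ Cons.IH] by simp
qed

lemma adm_id: "admissible E (\<lambda>a. [(a,True)])"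
  unfolding admissible_def using R_swap[of _ _ "[]" True True "[]"] by simp

lemma adm_comp: "admissible E \<sigma> \<Longrightarrow> admissible E \<tau> \<Longrightarrow> admissible E (\<lambda>a. subst_word \<sigma> (\<tau> a))"
  unfolding admissible_def
proof (intro allI impI)
  fix a c assume "\<forall>a c. E a c \<longrightarrow> (\<sigma> a @ \<sigma> c, \<sigma> c @ \<sigma> a) \<in> R"
    "\<forall>a c. E a c \<longrightarrow> (\<tau> a @ \<tau> c, \<tau> c @ \<tau> a) \<in> R" "E a c"
  then show "(subst_word \<sigma> (\<tau> a) @ subst_word \<sigma> (\<tau> c), subst_word \<sigma> (\<tau> c) @ subst_word \<sigma> (\<tau> a)) \<in> R"
    using subst_R[of \<sigma> "\<tau> a @ \<tau> c" "\<tau> c @ \<tau> a"] unfolding admissible_def by simp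
qed

lemma endo_cls: "admissible E \<sigma> \<Longrightarrow> raag_endo E \<sigma> (cls x) = cls (subst_word \<sigma> x)"
proof -
  assume adm: "admissible E \<sigma>"
  have "{z. \<exists>x'\<in>cls x. (subst_word \<sigma> x', z) \<in> R} = cls (subst_word \<sigma> x)"
  proof (rule Set.set_eqI)
    fix z show "z \<in> {z. \<exists>x'\<in>cls x. (subst_word \<sigma> x', z) \<in> R} \<longleftrightarrow> z \<in> cls (subst_word \<sigma> x)"
    proof
      assume "z \<in> {z. \<exists>x'\<in>cls x. (subst_word \<sigma> x', z) \<in> R}"
      then obtain x' where "(x,x') \<in> R" "(subst_word \<sigma> x', z) \<in> R" by (auto simp: cls_mem)
      then show "z \<in> cls (subst_word \<sigma> x)" using subst_R[OF adm] R_trans cls_mem by metis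
    next
      assume "z \<in> cls (subst_word \<sigma> x)"
      then show "z \<in> {z. \<exists>x'\<in>cls x. (subst_word \<sigma> x', z) \<in> R}"
        using cls_mem[of x x] by (auto simp: cls_mem)
    qed
  qed
  then show ?thesis unfolding raag_endo_def by simp
qed

lemma endo_eqI:
  assumes "admissible E \<sigma>" "admissible E \<tau>" "\<And>a. (\<sigma> a, \<tau> a) \<in> R"
  shows "raag_endo E \<sigma> = raag_endo E \<tau>"
proof
  fix P show "raag_endo E \<sigma> P = raag_endo E \<tau> P"
  proof (cases "P \<in> carrier G")
    case True
    then obtain x where "P = cls x" by (rule carrierE)
    then show ?thesis using assms endo_cls subst_cong[of \<sigma> \<tau> x] cls_eq by simp
  next
    case False then show ?thesis unfolding raag_endo_def by simp
  qed
qed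

lemma endo_comp:
  assumes "admissible E \<sigma>" "admissible E \<tau>"
  shows "compose (carrier G) (raag_endo E \<sigma>) (raag_endo E \<tau>) = raag_endo E (\<lambda>a. subst_word \<sigma> (\<tau> a))"
proof
  fix P show "compose (carrier G) (raag_endo E \<sigma>) (raag_endo E \<tau>) P = raag_endo E (\<lambda>a. subst_word \<sigma> (\<tau> a)) P"
  proof (cases "P \<in> carrier G")
    case True
    then obtain x where "P = cls x" by (rule carrierE)
    then show ?thesis using assms adm_comp[OF assms] endo_cls
      by (simp add: compose_def subst_subst)
  next
    case False then show ?thesis unfolding raag_endo_def compose_def by simp
  qed
qed

lemma endo_id: "raag_endo E (\<lambda>a. [(a,True)]) = (\<lambda>P\<in>carrier G. P)"
proof
  fix P show "raag_endo E (\<lambda>a. [(a,True)]) P = (\<lambda>P\<in>carrier G. P) P"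
  proof (cases "P \<in> carrier G")
    case True
    then obtain x where "P = cls x" by (rule carrierE)
    then show ?thesis using endo_cls[OF adm_id] by simp
  next
    case False then show ?thesis unfolding raag_endo_def by simp
  qed
qed

lemma endo_carrier: "admissible E \<sigma> \<Longrightarrow> P \<in> carrier G \<Longrightarrow> raag_endo E \<sigma> P \<in> carrier G"
  by (auto elim!: carrierE simp: endo_cls)

lemma endo_auto:
  assumes ip: "inv_pair E \<sigma> \<tau>"
  shows "raag_endo E \<sigma> \<in> auto G"
proof -
  have as: "admissible E \<sigma>" and at: "admissible E \<tau>" using ip unfolding inv_pair_def by auto
  have hom: "raag_endo E \<sigma> \<in> hom G G"
    unfolding hom_def using endo_carrier[OF as]
    by (auto elim!: carrierE simp: endo_cls[OF as])
  have l: "\<forall>P\<in>carrier G. raag_endo E \<tau> (raag_endo E \<sigma> P) = P"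
  proof
    fix P assume "P \<in> carrier G"
    then obtain x where x: "P = cls x" by (rule carrierE)
    have "(subst_word (\<lambda>a. subst_word \<tau> (\<sigma> a)) x, subst_word (\<lambda>a. [(a,True)]) x) \<in> R"
      by (rule subst_cong) (use ip in \<open>auto simp: inv_pair_def\<close>)
    then show "raag_endo E \<tau> (raag_endo E \<sigma> P) = P"
      using x as at by (simp add: endo_cls subst_subst cls_eq)
  qed
  have r: "\<forall>P\<in>carrier G. raag_endo E \<sigma> (raag_endo E \<tau> P) = P"
  proof
    fix P assume "P \<in> carrier G"
    then obtain x where x: "P = cls x" by (rule carrierE)
    have "(subst_word (\<lambda>a. subst_word \<sigma> (\<tau> a)) x, subst_word (\<lambda>a. [(a,True)]) x) \<in> R"
      by (rule subst_cong) (use ip in \<open>auto simp: inv_pair_def\<close>)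
    then show "raag_endo E \<sigma> (raag_endo E \<tau> P) = P"
      using x as at by (simp add: endo_cls subst_subst cls_eq)
  qed
  have "bij_betw (raag_endo E \<sigma>) (carrier G) (carrier G)"
    by (rule bij_betw_byWitness[OF l r]) (use endo_carrier as at in auto)
  moreover have "raag_endo E \<sigma> \<in> extensional (carrier G)"
    unfolding raag_endo_def by simp
  ultimately show ?thesis using hom unfolding auto_def Bij_def by simp
qed

lemma group_AG: "group AG"
  by (rule group.AutoGroup[OF group_G])

lemma AG_carrier: "carrier AG = auto G"
  by (simp add: AutoGroup_def BijGroup_def)

lemma AG_mult: "f \<in> auto G \<Longrightarrow> g \<in> auto G \<Longrightarrow> f \<otimes>\<^bsub>AG\<^esub> g = compose (carrier G) f g"
  by (simp add: AutoGroup_def BijGroup_def auto_def)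

lemma AG_one: "\<one>\<^bsub>AG\<^esub> = (\<lambda>x\<in>carrier G. x)"
  by (simp add: AutoGroup_def BijGroup_def)

lemma inv_pair_sym: "inv_pair E \<sigma> \<tau> \<Longrightarrow> inv_pair E \<tau> \<sigma>"
  unfolding inv_pair_def by auto

lemma endo_in_AG: "inv_pair E \<sigma> \<tau> \<Longrightarrow> raag_endo E \<sigma> \<in> carrier AG"
  using endo_auto AG_carrier by simp

lemma endo_mult:
  assumes "inv_pair E \<sigma> \<sigma>'" "inv_pair E \<tau> \<tau>'"
  shows "raag_endo E \<sigma> \<otimes>\<^bsub>AG\<^esub> raag_endo E \<tau> = raag_endo E (\<lambda>a. subst_word \<sigma> (\<tau> a))"
proof -
  have "raag_endo E \<sigma> \<in> auto G" "raag_endo E \<tau> \<in> auto G" using assms endo_auto by auto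
  then have "raag_endo E \<sigma> \<otimes>\<^bsub>AG\<^esub> raag_endo E \<tau> = compose (carrier G) (raag_endo E \<sigma>) (raag_endo E \<tau>)"
    by (rule AG_mult)
  also have "\<dots> = raag_endo E (\<lambda>a. subst_word \<sigma> (\<tau> a))"
    using assms endo_comp unfolding inv_pair_def by simp
  finally show ?thesis .
qed

lemma endo_inv:
  assumes ip: "inv_pair E \<sigma> \<tau>"
  shows "inv\<^bsub>AG\<^esub> (raag_endo E \<sigma>) = raag_endo E \<tau>"
proof (rule group.inv_equality[OF group_AG])
  have ip': "inv_pair E \<tau> \<sigma>" using inv_pair_sym[OF ip] .
  have as: "admissible E \<sigma>" and at: "admissible E \<tau>" using ip unfolding inv_pair_def by auto
  have "raag_endo E \<tau> \<otimes>\<^bsub>AG\<^esub> raag_endo E \<sigma> = raag_endo E (\<lambda>a. subst_word \<tau> (\<sigma> a))"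
    by (rule endo_mult[OF ip' ip])
  also have "\<dots> = raag_endo E (\<lambda>a. [(a,True)])"
    by (rule endo_eqI[OF adm_comp[OF at as] adm_id]) (use ip in \<open>simp add: inv_pair_def\<close>)
  also have "\<dots> = \<one>\<^bsub>AG\<^esub>" by (simp add: endo_id AG_one)
  finally show "raag_endo E \<tau> \<otimes>\<^bsub>AG\<^esub> raag_endo E \<sigma> = \<one>\<^bsub>AG\<^esub>" .
  show "raag_endo E \<sigma> \<in> carrier AG" using endo_in_AG[OF ip] .
  show "raag_endo E \<tau> \<in> carrier AG" using endo_in_AG[OF ip'] .
qed

end

definition Tr :: "'v \<Rightarrow> 'v word \<Rightarrow> ('v \<Rightarrow> 'v word)" where
  "Tr a x = (\<lambda>c. if c = a then (a,True)#x else [(c,True)])"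

definition okTr :: "('v \<Rightarrow> 'v \<Rightarrow> bool) \<Rightarrow> 'v \<Rightarrow> 'v word \<Rightarrow> bool" where
  "okTr E a x \<longleftrightarrow> a \<notin> fst ` set x \<and> (\<forall>d. E a d \<longrightarrow> (\<forall>c\<in>fst ` set x. c = d \<or> E d c))"

lemma expsum_Nil[simp]: "expsum u [] = 0"
  by (simp add: expsum_def)
lemma expsum_Cons[simp]: "expsum u (l#x) = (if l = (u,True) then 1 else if l = (u,False) then -1 else 0) + expsum u x"
  by (auto simp: expsum_def)
lemma expsum_append[simp]: "expsum u (x@y) = expsum u x + expsum u y"
  by (simp add: expsum_def)
lemma expsum_inv[simp]: "expsum u (inv_word x) = - expsum u x"
  by (induction x) auto
lemma expsum_replicate[simp]: "expsum u (replicate n l) = int n * expsum u [l]"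
  by (induction n) (auto simp: algebra_simps)

context raag
begin

abbreviation T where "T a x \<equiv> raag_endo E (Tr a x)"

lemma letter_word_comm:
  "(\<forall>c\<in>fst ` set ys. c = d \<or> E d c) \<Longrightarrow> ([(d,e)] @ ys, ys @ [(d,e)]) \<in> R"
proof (induction ys)
  case Nil then show ?case by simp
next
  case (Cons l ys)
  obtain c f where l: "l = (c,f)" by force
  have IH: "([(d,e)] @ ys, ys @ [(d,e)]) \<in> R" using Cons by simp
  have 1: "([(d,e), l] @ ys, [l,(d,e)] @ ys) \<in> R"
  proof (cases "c = d")
    case True
    show ?thesis
    proof (cases "f = e")
      case True then show ?thesis using l \<open>c = d\<close> by simp
    next
      case False
      then have "f = (\<not> e)" by auto
      have a: "([] @ [(d,e),(d,\<not>e)] @ ys, [] @ ys) \<in> R" by (rule R_cancel)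
      have b: "([] @ [(d,\<not>e),(d,\<not>\<not>e)] @ ys, [] @ ys) \<in> R" by (rule R_cancel)
      show ?thesis using R_trans[OF a R_sym[OF b]] l \<open>c = d\<close> \<open>f = (\<not> e)\<close> by simp
    qed
  next
    case False
    then have "E d c" using Cons.prems l by auto
    then show ?thesis using R_swap[of d c "[]" e f ys] l by simp
  qed
  have 2: "([l] @ ([(d,e)] @ ys) @ [], [l] @ (ys @ [(d,e)]) @ []) \<in> R"
    by (rule R_app3[OF R_refl IH R_refl])
  show ?case using R_trans[OF 1[simplified] 2[simplified]] by simp
qed

lemma Tr_comm:
  assumes ok: "okTr E a x" and ad: "E a d" and dne: "d \<noteq> a"
  shows "((a,True)#x @ [(d,True)], [(d,True)] @ (a,True)#x) \<in> R"
proof -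
  have h: "([(d,True)] @ x, x @ [(d,True)]) \<in> R"
    by (rule letter_word_comm) (use ok ad in \<open>auto simp: okTr_def\<close>)
  have 1: "([(a,True)] @ (x @ [(d,True)]) @ [], [(a,True)] @ ([(d,True)] @ x) @ []) \<in> R"
    by (rule R_app3[OF R_refl R_sym[OF h] R_refl])
  have 2: "([] @ [(a,True),(d,True)] @ x, [] @ [(d,True),(a,True)] @ x) \<in> R"
    using R_swap[OF ad] .
  show ?thesis using R_trans[OF 1[simplified] 2[simplified]] by simp
qed

lemma adm_Tr: assumes ok: "okTr E a x" shows "admissible E (Tr a x)"
  unfolding admissible_def
proof (intro allI impI)
  fix c d assume cd: "E c d"
  show "(Tr a x c @ Tr a x d, Tr a x d @ Tr a x c) \<in> R"
  proof (cases "c = a")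
    case ca: True
    show ?thesis
    proof (cases "d = a")
      case True then show ?thesis using ca by simp
    next
      case False then show ?thesis using Tr_comm[OF ok, of d] cd ca by (simp add: Tr_def)
    qed
  next
    case cna: False
    show ?thesis
    proof (cases "d = a")
      case True
      have "E a c" using symE[OF cd] True by simp
      then have "((a,True)#x @ [(c,True)], [(c,True)] @ (a,True)#x) \<in> R" using Tr_comm[OF ok] cna by simp
      then show ?thesis using True cna R_sym by (simp add: Tr_def)
    next
      case False then show ?thesis using R_swap[OF cd, of "[]" True True "[]"] cna by (simp add: Tr_def)
    qed
  qed
qed

lemma okTr_inv: "okTr E a x \<Longrightarrow> okTr E a (inv_word x)"
  by (simp add: okTr_def)

lemma okTr_app: "okTr E a x \<Longrightarrow> okTr E a y \<Longrightarrow> okTr E a (x@y)"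
  by (auto simp: okTr_def)

lemma okTr_Nil: "okTr E a []"
  by (simp add: okTr_def)

lemma Tr_comp: "a \<notin> fst ` set y \<Longrightarrow> (\<lambda>c. subst_word (Tr a x) (Tr a y c)) = Tr a (x@y)"
proof
  fix c assume ay: "a \<notin> fst ` set y"
  have "subst_word (Tr a x) y = y"
    by (rule subst_fix) (use ay in \<open>force simp: Tr_def\<close>)
  then show "subst_word (Tr a x) (Tr a y c) = Tr a (x@y) c"
    by (simp add: Tr_def)
qed

lemma inv_pair_Tr: assumes ok: "okTr E a x" shows "inv_pair E (Tr a x) (Tr a (inv_word x))"
proof -
  have ok': "okTr E a (inv_word x)" using okTr_inv[OF ok] .
  have a1: "a \<notin> fst ` set (inv_word x)" "a \<notin> fst ` set x" using ok by (auto simp: okTr_def)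
  have 1: "\<And>c. (Tr a (x @ inv_word x) c, [(c,True)]) \<in> R"
    using R_app[OF R_refl[of "[(a,True)]"] R_rinv[of x]] by (simp add: Tr_def)
  have 2: "\<And>c. (Tr a (inv_word x @ x) c, [(c,True)]) \<in> R"
    using R_app[OF R_refl[of "[(a,True)]"] R_linv[of x]] by (simp add: Tr_def)
  show ?thesis
  proof -
    have e1: "(\<lambda>c. subst_word (Tr a x) (Tr a (inv_word x) c)) = Tr a (x @ inv_word x)"
      using Tr_comp[OF a1(1), of x] .
    have e2: "(\<lambda>c. subst_word (Tr a (inv_word x)) (Tr a x c)) = Tr a (inv_word x @ x)"
      using Tr_comp[OF a1(2), of "inv_word x"] .
    have f1: "\<And>c. subst_word (Tr a x) (Tr a (inv_word x) c) = Tr a (x @ inv_word x) c"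
      using fun_cong[OF e1] by simp
    have f2: "\<And>c. subst_word (Tr a (inv_word x)) (Tr a x c) = Tr a (inv_word x @ x) c"
      using fun_cong[OF e2] by simp
    have "\<forall>c. (subst_word (Tr a x) (Tr a (inv_word x) c), [(c,True)]) \<in> R"
      unfolding f1 using 1 by blast
    moreover have "\<forall>c. (subst_word (Tr a (inv_word x)) (Tr a x c), [(c,True)]) \<in> R"
      unfolding f2 using 2 by blast
    ultimately show ?thesis unfolding inv_pair_def using adm_Tr[OF ok] adm_Tr[OF ok'] by blast
  qed
qed

lemma T_in: "okTr E a x \<Longrightarrow> T a x \<in> carrier AG"
  using endo_in_AG inv_pair_Tr by blast

lemma T_mult: "okTr E a x \<Longrightarrow> okTr E a y \<Longrightarrow> T a x \<otimes>\<^bsub>AG\<^esub> T a y = T a (x@y)"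
proof -
  assume ox: "okTr E a x" and oy: "okTr E a y"
  have "a \<notin> fst ` set y" using oy by (simp add: okTr_def)
  then have e: "(\<lambda>c. subst_word (Tr a x) (Tr a y c)) = Tr a (x@y)" by (rule Tr_comp)
  show ?thesis using endo_mult[OF inv_pair_Tr[OF ox] inv_pair_Tr[OF oy]] unfolding e .
qed

lemma T_inv: "okTr E a x \<Longrightarrow> inv\<^bsub>AG\<^esub> (T a x) = T a (inv_word x)"
  using endo_inv[OF inv_pair_Tr] by blast

lemma T_Nil: "T a [] = \<one>\<^bsub>AG\<^esub>"
proof -
  have "Tr a [] = (\<lambda>c. [(c,True)])" by (auto simp: Tr_def)
  then show ?thesis by (simp add: endo_id AG_one)
qed

lemma T_cong: "okTr E a x \<Longrightarrow> okTr E a y \<Longrightarrow> (x,y) \<in> R \<Longrightarrow> T a x = T a y"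
proof (rule endo_eqI[OF adm_Tr adm_Tr])
  fix c assume "(x,y) \<in> R"
  then have "([(a,True)] @ x, [(a,True)] @ y) \<in> R" by (rule R_app[OF R_refl])
  then show "(Tr a x c, Tr a y c) \<in> R" by (simp add: Tr_def)
qed

lemma transvection_T: "transvection E a c = T a [(c,True)]"
  unfolding transvection_def Tr_def by simp

lemma okTr_replicate: "okTr E a [(c,True)] \<Longrightarrow> okTr E a (replicate n (c,True))"
  by (auto simp: okTr_def)

lemma T_pow: assumes ok: "okTr E a [(c,True)]"
  shows "(T a [(c,True)]) [^]\<^bsub>AG\<^esub> n = T a (replicate n (c,True))"
proof (induction n)
  case 0 then show ?case by (simp add: T_Nil)
next
  case (Suc n)
  have "(T a [(c,True)]) [^]\<^bsub>AG\<^esub> Suc n = T a (replicate n (c,True)) \<otimes>\<^bsub>AG\<^esub> T a [(c,True)]"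
    using Suc by simp
  also have "\<dots> = T a (replicate n (c,True) @ [(c,True)])"
    by (rule T_mult[OF okTr_replicate[OF ok] ok])
  finally show ?case by (simp add: replicate_append_same)
qed

lemma expsum_step: "(x,y) \<in> raag_step E \<Longrightarrow> expsum c x = expsum c y"
proof -
  assume "(x,y) \<in> raag_step E"
  then consider (c) xs ys a b where "x = xs @ [(a, b), (a, \<not> b)] @ ys" "y = xs @ ys"
    | (s) xs ys a b c d where "x = xs @ [(a, b), (c,d)] @ ys" "y = xs @ [(c,d),(a,b)] @ ys"
    unfolding raag_step_def by blast
  then show ?thesis by cases auto
qed

lemma expsum_R: "(x,y) \<in> R \<Longrightarrow> expsum c x = expsum c y"
  unfolding raag_rel_def
proof (induction rule: rtrancl_induct)
  case base then show ?case by simp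
next
  case (step y z) then show ?case using expsum_step by auto
qed

lemma expsum_cls_cls: "expsum_cls c (cls x) = expsum c x"
proof -
  have "x \<in> cls x" by (simp add: cls_mem)
  then have "(SOME z. z \<in> cls x) \<in> cls x" by (rule someI)
  then have "(x, SOME z. z \<in> cls x) \<in> R" by (simp add: cls_mem)
  then show ?thesis unfolding expsum_cls_def using expsum_R by metis
qed

lemma H1_endo: "admissible E \<sigma> \<Longrightarrow> H1_matrix E (raag_endo E \<sigma>) a c = expsum c (\<sigma> a)"
  unfolding H1_matrix_def by (simp add: endo_cls expsum_cls_cls)

end

lemma expsum_notin: "c \<notin> fst ` set x \<Longrightarrow> expsum c x = 0"
  by (induction x) (auto simp: image_iff)

lemma inv_word_replicate[simp]: "inv_word (replicate n (a,b)) = replicate n (a, \<not> b)"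
  by (induction n) (auto simp: replicate_append_same)

lemma subst_replicate: "subst_word \<sigma> (replicate n l) = concat (replicate n (subst_word \<sigma> [l]))"
  by (induction n) auto

lemma concat_replicate_snoc: "concat (replicate (Suc k) XX) = concat (replicate k XX) @ XX"
  by (induction k) auto

locale setting = raag +
  fixes v u w and m :: nat
  assumes vu: "v \<noteq> u" and vw: "v \<noteq> w" and uw: "u \<noteq> w"
    and dvu: "dom_le E v u" and dvw: "dom_le E v w" and duw: "dom_le E u w"
begin

definition good :: "'a word \<Rightarrow> bool" where "good x \<longleftrightarrow> fst ` set x \<subseteq> {u,w}"

abbreviation W where "W \<equiv> replicate m (w,True)"

abbreviation H where "H \<equiv> SIA E m \<inter> carrier AG"
abbreviation D where "D \<equiv> derived AG H"

lemma dom_leD: "dom_le E a c \<Longrightarrow> E a d \<Longrightarrow> d = c \<or> E d c"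
  unfolding dom_le_def lk_def st_def using symE by auto

lemma ok_v: "good x \<Longrightarrow> okTr E v x"
  unfolding okTr_def good_def using vu vw dom_leD[OF dvu] dom_leD[OF dvw] by blast

lemma ok_uW: "okTr E u (replicate n (w,True))"
  unfolding okTr_def using uw dom_leD[OF duw] by auto

lemma T_gen:
  assumes "okTr E a x" "\<forall>c\<in>fst ` set x. a \<noteq> c \<and> dom_le E a c"
  shows "T a x \<in> SAut0 E"
  using assms
proof (induction x)
  case Nil then show ?case by (simp add: T_Nil SAut0_def generate.one)
next
  case (Cons l x)
  obtain c b where l: "l = (c,b)" by force
  have ox: "okTr E a x" and ol: "okTr E a [l]" using Cons.prems(1) by (auto simp: okTr_def)
  have ca: "a \<noteq> c" "dom_le E a c" using Cons.prems(2) l by auto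
  have gen: "T a [(c,True)] \<in> SAut0 E"
    unfolding SAut0_def transvection_T[symmetric] using ca by (intro generate.incl) blast
  have "T a [l] \<in> SAut0 E"
  proof (cases b)
    case True then show ?thesis using gen l by simp
  next
    case False
    have ol': "okTr E a [(c,True)]" using ol l by (simp add: okTr_def)
    have "inv\<^bsub>AG\<^esub> (T a [(c,True)]) = T a [l]" using T_inv[OF ol'] l False by simp
    moreover have "inv\<^bsub>AG\<^esub> (T a [(c,True)]) \<in> SAut0 E"
      unfolding SAut0_def transvection_T[symmetric] using ca by (intro generate.inv) blast
    ultimately show ?thesis by simp
  qed
  moreover have "T a x \<in> SAut0 E" using Cons ox by auto
  ultimately have "T a [l] \<otimes>\<^bsub>AG\<^esub> T a x \<in> SAut0 E" unfolding SAut0_def by (rule generate.eng)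
  then show ?case using T_mult[OF ol ox] by simp
qed

lemma SIA_I:
  assumes "\<phi> \<in> SAut0 E" "\<phi> \<in> carrier AG"
    "\<And>a c. int m dvd (H1_matrix E \<phi> a c - (if a = c then 1 else 0))"
  shows "\<phi> \<in> H"
  using assms unfolding SIA_def by (simp add: cong_iff_dvd_diff)

lemma T_H:
  assumes g: "good x" and du: "int m dvd expsum u x" and dw: "int m dvd expsum w x"
  shows "T v x \<in> H"
proof (rule SIA_I)
  have ok: "okTr E v x" using ok_v[OF g] .
  show "T v x \<in> SAut0 E"
    by (rule T_gen[OF ok]) (use g vu vw dvu dvw in \<open>auto simp: good_def\<close>)
  show "T v x \<in> carrier AG" using T_in[OF ok] .
  fix a c
  have dc: "int m dvd expsum c x"
  proof (cases "c \<in> {u,w}")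
    case True then show ?thesis using du dw by auto
  next
    case False then have "c \<notin> fst ` set x" using g by (auto simp: good_def)
    then show ?thesis by (simp add: expsum_notin)
  qed
  show "int m dvd (H1_matrix E (T v x) a c - (if a = c then 1 else 0))"
    unfolding H1_endo[OF adm_Tr[OF ok]] using dc by (simp add: Tr_def)
qed

lemma b_H: "T u W \<in> H"
proof (rule SIA_I)
  show "T u W \<in> SAut0 E"
    by (rule T_gen[OF ok_uW]) (use uw duw in auto)
  show "T u W \<in> carrier AG" using T_in[OF ok_uW] .
  fix a c
  show "int m dvd (H1_matrix E (T u W) a c - (if a = c then 1 else 0))"
    unfolding H1_endo[OF adm_Tr[OF ok_uW]] by (simp add: Tr_def)
qed

end

context setting
begin

lemma fst_subst: "fst ` set (subst_word \<sigma> x) \<subseteq> (\<Union>c\<in>fst ` set x. fst ` set (\<sigma> c))"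
proof (induction x)
  case Nil then show ?case by simp
next
  case (Cons l x)
  have "fst ` set (if snd l then \<sigma> (fst l) else inv_word (\<sigma> (fst l))) = fst ` set (\<sigma> (fst l))"
    by simp
  then have "fst ` set (subst_word \<sigma> (l#x)) = fst ` set (\<sigma> (fst l)) \<union> fst ` set (subst_word \<sigma> x)"
    by (simp only: subst_Cons set_append image_Un)
  then show ?case using Cons by auto
qed

lemma good_simps[simp]:
  "good []"
  "good (x@y) \<longleftrightarrow> good x \<and> good y"
  "good (inv_word x) \<longleftrightarrow> good x"
  "good ((a,b)#x) \<longleftrightarrow> a \<in> {u,w} \<and> good x"
  "good (replicate n (a,b)) \<longleftrightarrow> n = 0 \<or> a \<in> {u,w}"
  by (auto simp: good_def)

lemma good_subst_b: "good x \<Longrightarrow> good (subst_word (Tr u W) x)"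
proof -
  assume g: "good x"
  have "fst ` set (subst_word (Tr u W) x) \<subseteq> (\<Union>c\<in>fst ` set x. fst ` set (Tr u W c))"
    by (rule fst_subst)
  also have "\<dots> \<subseteq> {u,w}" using g by (auto simp: good_def Tr_def split: if_splits)
  finally show ?thesis by (simp add: good_def)
qed

lemma D_sub: "subgroup D AG"
  by (rule group.derived_is_subgroup[OF group_AG]) (rule Int_lower2)

lemma comm_D: "h1 \<in> H \<Longrightarrow> h2 \<in> H \<Longrightarrow>
   h1 \<otimes>\<^bsub>AG\<^esub> h2 \<otimes>\<^bsub>AG\<^esub> inv\<^bsub>AG\<^esub> h1 \<otimes>\<^bsub>AG\<^esub> inv\<^bsub>AG\<^esub> h2 \<in> D"
  unfolding derived_def
  apply (rule generate.incl)
  apply (rule UN_I[of h1], assumption)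
  apply (rule UN_I[of h2], assumption)
  apply simp
  done

definition N :: "'a word \<Rightarrow> bool" where "N x \<longleftrightarrow> good x \<and> T v x \<in> D"

definition K :: "'a word \<Rightarrow> bool" where
  "K x \<longleftrightarrow> good x \<and> int m dvd expsum u x \<and> int m dvd expsum w x"

lemma N_Nil: "N []"
  unfolding N_def using subgroup.one_closed[OF D_sub] by (simp add: T_Nil)

lemma N_app: "N x \<Longrightarrow> N y \<Longrightarrow> N (x@y)"
proof -
  assume "N x" "N y"
  then have g: "good x" "good y" and d: "T v x \<in> D" "T v y \<in> D" by (auto simp: N_def)
  have "T v x \<otimes>\<^bsub>AG\<^esub> T v y \<in> D" by (rule subgroup.m_closed[OF D_sub d])
  then show ?thesis unfolding N_def T_mult[OF ok_v[OF g(1)] ok_v[OF g(2)]] using g by simp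
qed

lemma N_inv: "N x \<Longrightarrow> N (inv_word x)"
proof -
  assume "N x"
  then have g: "good x" and d: "T v x \<in> D" by (auto simp: N_def)
  have "inv\<^bsub>AG\<^esub> (T v x) \<in> D" by (rule subgroup.m_inv_closed[OF D_sub d])
  then show ?thesis unfolding N_def T_inv[OF ok_v[OF g]] using g by simp
qed

lemma N_cong: "N x \<Longrightarrow> good y \<Longrightarrow> (x,y) \<in> R \<Longrightarrow> N y"
proof -
  assume "N x" "good y" "(x,y) \<in> R"
  then have g: "good x" and d: "T v x \<in> D" by (auto simp: N_def)
  have "T v x = T v y" by (rule T_cong[OF ok_v[OF g] ok_v[OF \<open>good y\<close>] \<open>(x,y) \<in> R\<close>])
  then show ?thesis unfolding N_def using d \<open>good y\<close> by simp
qed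

lemma K_H: "K x \<Longrightarrow> T v x \<in> H"
  unfolding K_def using T_H by blast

lemma N_comm: assumes "K x" "K y" shows "N (x @ y @ inv_word x @ inv_word y)"
proof -
  have gx: "good x" and gy: "good y" using assms by (auto simp: K_def)
  note ox = ok_v[OF gx] and oy = ok_v[OF gy]
  have "T v x \<otimes>\<^bsub>AG\<^esub> T v y \<otimes>\<^bsub>AG\<^esub> inv\<^bsub>AG\<^esub> (T v x) \<otimes>\<^bsub>AG\<^esub> inv\<^bsub>AG\<^esub> (T v y) \<in> D"
    by (rule comm_D[OF K_H K_H]) (use assms in auto)
  also have "T v x \<otimes>\<^bsub>AG\<^esub> T v y \<otimes>\<^bsub>AG\<^esub> inv\<^bsub>AG\<^esub> (T v x) \<otimes>\<^bsub>AG\<^esub> inv\<^bsub>AG\<^esub> (T v y)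
      = T v (x @ y @ inv_word x @ inv_word y)"
    using ox oy okTr_inv[OF ox] okTr_inv[OF oy]
    by (simp add: T_inv T_mult okTr_app)
  finally show ?thesis unfolding N_def using gx gy by simp
qed

lemma b_conj: assumes g: "good x"
  shows "T u W \<otimes>\<^bsub>AG\<^esub> T v x = T v (subst_word (Tr u W) x) \<otimes>\<^bsub>AG\<^esub> T u W"
proof -
  define y where "y = subst_word (Tr u W) x"
  have gy: "good y" using good_subst_b[OF g] y_def by simp
  have "T u W \<otimes>\<^bsub>AG\<^esub> T v x = raag_endo E (\<lambda>c. subst_word (Tr u W) (Tr v x c))"
    by (rule endo_mult[OF inv_pair_Tr[OF ok_uW] inv_pair_Tr[OF ok_v[OF g]]])
  also have "(\<lambda>c. subst_word (Tr u W) (Tr v x c)) = (\<lambda>c. subst_word (Tr v y) (Tr u W c))"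
  proof
    fix c
    show "subst_word (Tr u W) (Tr v x c) = subst_word (Tr v y) (Tr u W c)"
    proof (cases "c = v")
      case True then show ?thesis using vu unfolding y_def by (simp add: Tr_def)
    next
      case False
      have fix1: "subst_word (Tr v y) (Tr u W c) = Tr u W c"
        by (rule subst_fix) (use vu vw False in \<open>auto simp: Tr_def split: if_splits\<close>)
      then show ?thesis using False by (simp add: Tr_def)
    qed
  qed
  also have "raag_endo E (\<lambda>c. subst_word (Tr v y) (Tr u W c)) = T v y \<otimes>\<^bsub>AG\<^esub> T u W"
    by (rule endo_mult[OF inv_pair_Tr[OF ok_v[OF gy]] inv_pair_Tr[OF ok_uW], symmetric])
  finally show ?thesis unfolding y_def .
qed

lemma conj_comm:
  assumes "a \<in> carrier AG" "t \<in> carrier AG" "t' \<in> carrier AG" "a \<otimes>\<^bsub>AG\<^esub> t = t' \<otimes>\<^bsub>AG\<^esub> a"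
  shows "a \<otimes>\<^bsub>AG\<^esub> t \<otimes>\<^bsub>AG\<^esub> inv\<^bsub>AG\<^esub> a \<otimes>\<^bsub>AG\<^esub> inv\<^bsub>AG\<^esub> t = t' \<otimes>\<^bsub>AG\<^esub> inv\<^bsub>AG\<^esub> t"
proof -
  interpret g: group AG by (rule group_AG)
  have "a \<otimes>\<^bsub>AG\<^esub> t \<otimes>\<^bsub>AG\<^esub> inv\<^bsub>AG\<^esub> a = t' \<otimes>\<^bsub>AG\<^esub> a \<otimes>\<^bsub>AG\<^esub> inv\<^bsub>AG\<^esub> a" using assms(4) by simp
  also have "\<dots> = t'" using assms by (simp add: g.m_assoc)
  finally show ?thesis by simp
qed

lemma N_B: assumes g: "good x" and k: "K x"
  shows "N (subst_word (Tr u W) x @ inv_word x)"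
proof -
  define y where "y = subst_word (Tr u W) x"
  have gy: "good y" using good_subst_b[OF g] y_def by simp
  have "T u W \<otimes>\<^bsub>AG\<^esub> T v x \<otimes>\<^bsub>AG\<^esub> inv\<^bsub>AG\<^esub> (T u W) \<otimes>\<^bsub>AG\<^esub> inv\<^bsub>AG\<^esub> (T v x) \<in> D"
    by (rule comm_D[OF b_H K_H[OF k]])
  also have "T u W \<otimes>\<^bsub>AG\<^esub> T v x \<otimes>\<^bsub>AG\<^esub> inv\<^bsub>AG\<^esub> (T u W) \<otimes>\<^bsub>AG\<^esub> inv\<^bsub>AG\<^esub> (T v x) = T v y \<otimes>\<^bsub>AG\<^esub> inv\<^bsub>AG\<^esub> (T v x)"
    by (rule conj_comm[OF T_in[OF ok_uW] T_in[OF ok_v[OF g]] T_in[OF ok_v[OF gy]]])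
       (simp add: b_conj[OF g] y_def)
  also have "\<dots> = T v (y @ inv_word x)"
    using T_inv[OF ok_v[OF g]] T_mult[OF ok_v[OF gy] okTr_inv[OF ok_v[OF g]]] by simp
  finally show ?thesis unfolding N_def y_def using gy g y_def by simp
qed

end

context setting
begin

definition sq where "sq = (\<lambda>c. if c \<in> {v} then [(u,False),(v,True),(u,True)] else [(c,True)])"
definition sq' where "sq' = (\<lambda>c. if c = v then [(u,True),(v,True),(u,False)] else [(c,True)])"

lemma adm_v:
  assumes "\<And>d c. E v d \<Longrightarrow> c \<in> fst ` set Z \<Longrightarrow> c = d \<or> E d c"
  shows "admissible E (\<lambda>c. if c = v then Z else [(c,True)])"
  unfolding admissible_def
proof (intro allI impI)
  fix c d assume cd: "E c d"
  show "((if c = v then Z else [(c, True)]) @ (if d = v then Z else [(d, True)]),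
         (if d = v then Z else [(d, True)]) @ (if c = v then Z else [(c, True)])) \<in> R"
  proof (cases "c = v")
    case cv: True
    show ?thesis
    proof (cases "d = v")
      case True then show ?thesis using cv by simp
    next
      case False
      have "([(d,True)] @ Z, Z @ [(d,True)]) \<in> R"
        by (rule letter_word_comm) (use assms cd cv in auto)
      then show ?thesis using cv False R_sym by simp
    qed
  next
    case cnv: False
    show ?thesis
    proof (cases "d = v")
      case True
      have "([(c,True)] @ Z, Z @ [(c,True)]) \<in> R"
        by (rule letter_word_comm) (use assms symE[OF cd] True in auto)
      then show ?thesis using cnv True by simp
    next
      case False then show ?thesis using R_swap[OF cd, of "[]" True True "[]"] cnv by simp
    qed
  qed
qed

lemma lkv_u: "E v d \<Longrightarrow> d = u \<or> E d u"
  using dom_leD[OF dvu] .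

lemma sq_eq: "sq = (\<lambda>c. if c = v then [(u,False),(v,True),(u,True)] else [(c,True)])"
  unfolding sq_def by auto

lemma adm_sq: "admissible E sq"
  unfolding sq_eq by (rule adm_v) (use lkv_u symE in auto)

lemma adm_sq': "admissible E sq'"
  unfolding sq'_def by (rule adm_v) (use lkv_u symE in auto)

lemma inv_pair_sq: "inv_pair E sq sq'"
proof -
  have c1: "([(u,True),(u,False),(v,True),(u,True),(u,False)], [(v,True)]) \<in> R"
  proof -
    have a: "([] @ [(u,True),(u,\<not>True)] @ [(v,True),(u,True),(u,False)], [] @ [(v,True),(u,True),(u,False)]) \<in> R"
      by (rule R_cancel)
    have b: "([(v,True)] @ [(u,True),(u,\<not>True)] @ [], [(v,True)] @ []) \<in> R"
      by (rule R_cancel)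
    show ?thesis using R_trans[OF a[simplified] b[simplified]] by simp
  qed
  have c2: "([(u,False),(u,True),(v,True),(u,False),(u,True)], [(v,True)]) \<in> R"
  proof -
    have a: "([] @ [(u,False),(u,\<not>False)] @ [(v,True),(u,False),(u,True)], [] @ [(v,True),(u,False),(u,True)]) \<in> R"
      by (rule R_cancel)
    have b: "([(v,True)] @ [(u,False),(u,\<not>False)] @ [], [(v,True)] @ []) \<in> R"
      by (rule R_cancel)
    show ?thesis using R_trans[OF a[simplified] b[simplified]] by simp
  qed
  have "\<forall>a. (subst_word sq (sq' a), [(a,True)]) \<in> R"
    using c1 vu by (auto simp: sq_eq sq'_def)
  moreover have "\<forall>a. (subst_word sq' (sq a), [(a,True)]) \<in> R"
    using c2 vu by (auto simp: sq_eq sq'_def)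
  ultimately show ?thesis unfolding inv_pair_def using adm_sq adm_sq' by blast
qed

abbreviation q where "q \<equiv> raag_endo E sq"

lemma q_pc: "partial_conj E u {v} = q"
  unfolding partial_conj_def sq_def by (rule arg_cong[where f = "raag_endo E"]) (auto simp: fun_eq_iff)

lemma comp_v: assumes nvu: "\<not> E v u" shows "{v} \<in> components_off_star E u"
proof -
  let ?RR = "{(a, b). E a b \<and> a \<notin> st E u \<and> b \<notin> st E u}"
  have vst: "v \<notin> st E u" using nvu vu symE by (auto simp: st_def lk_def)
  have "?RR\<^sup>* `` {v} \<subseteq> {v}"
  proof
    fix b assume "b \<in> ?RR\<^sup>* `` {v}"
    then have "(v,b) \<in> ?RR\<^sup>*" by simp
    then show "b \<in> {v}"
    proof (induction rule: rtrancl_induct)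
      case base then show ?case by simp
    next
      case (step y z)
      then have "E v z" "z \<notin> st E u" by auto
      then show ?case using dvu by (auto simp: dom_le_def lk_def)
    qed
  qed
  then have "?RR\<^sup>* `` {v} = {v}" by auto
  moreover have "?RR\<^sup>* `` {v} \<in> (UNIV - st E u) // ?RR\<^sup>*"
    by (rule quotientI) (use vst in simp)
  ultimately show ?thesis unfolding components_off_star_def by simp
qed

lemma q_H: assumes nvu: "\<not> E v u" shows "q \<in> H"
proof (rule SIA_I)
  show "q \<in> SAut0 E"
    unfolding SAut0_def q_pc[symmetric] using comp_v[OF nvu] by (intro generate.incl) blast
  show "q \<in> carrier AG" using endo_in_AG[OF inv_pair_sq] .
  fix a c
  show "int m dvd (H1_matrix E q a c - (if a = c then 1 else 0))"
    unfolding H1_endo[OF adm_sq] using vu by (auto simp: sq_eq)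
qed

lemma q_conj: assumes g: "good x"
  shows "q \<otimes>\<^bsub>AG\<^esub> T v x = T v ([(u,True)] @ x @ [(u,False)]) \<otimes>\<^bsub>AG\<^esub> q"
proof -
  define x' where "x' = [(u,True)] @ x @ [(u,False)]"
  have gx': "good x'" using g by (simp add: x'_def)
  have "q \<otimes>\<^bsub>AG\<^esub> T v x = raag_endo E (\<lambda>c. subst_word sq (Tr v x c))"
    by (rule endo_mult[OF inv_pair_sq inv_pair_Tr[OF ok_v[OF g]]])
  also have "\<dots> = raag_endo E (\<lambda>c. subst_word (Tr v x') (sq c))"
  proof (rule endo_eqI[OF adm_comp[OF adm_sq adm_Tr[OF ok_v[OF g]]] adm_comp[OF adm_Tr[OF ok_v[OF gx']] adm_sq]])
    fix c
    have fx: "subst_word sq x = x"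
      by (rule subst_fix) (use g vu vw in \<open>auto simp: sq_eq good_def\<close>)
    show "(subst_word sq (Tr v x c), subst_word (Tr v x') (sq c)) \<in> R"
    proof (cases "c = v")
      case True
      have "([(u,False),(v,True),(u,True)] @ x @ [(u,False),(u,\<not>False)] @ [],
             [(u,False),(v,True),(u,True)] @ x @ []) \<in> R"
        using R_cancel[of "[(u,False),(v,True),(u,True)] @ x" u False "[]"] by simp
      then show ?thesis using True vu fx R_sym by (simp add: Tr_def sq_eq x'_def)
    next
      case False then show ?thesis by (simp add: Tr_def sq_eq)
    qed
  qed
  also have "raag_endo E (\<lambda>c. subst_word (Tr v x') (sq c)) = T v x' \<otimes>\<^bsub>AG\<^esub> q"
    by (rule endo_mult[OF inv_pair_Tr[OF ok_v[OF gx']] inv_pair_sq, symmetric])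
  finally show ?thesis unfolding x'_def .
qed

lemma N_C: assumes nvu: "\<not> E v u" and k: "K x"
  shows "N ([(u,True)] @ x @ [(u,False)] @ inv_word x)"
proof -
  define x' where "x' = [(u,True)] @ x @ [(u,False)]"
  have g: "good x" using k by (simp add: K_def)
  have gx': "good x'" using g by (simp add: x'_def)
  have "q \<otimes>\<^bsub>AG\<^esub> T v x \<otimes>\<^bsub>AG\<^esub> inv\<^bsub>AG\<^esub> q \<otimes>\<^bsub>AG\<^esub> inv\<^bsub>AG\<^esub> (T v x) \<in> D"
    by (rule comm_D[OF q_H[OF nvu] K_H[OF k]])
  also have "q \<otimes>\<^bsub>AG\<^esub> T v x \<otimes>\<^bsub>AG\<^esub> inv\<^bsub>AG\<^esub> q \<otimes>\<^bsub>AG\<^esub> inv\<^bsub>AG\<^esub> (T v x) = T v x' \<otimes>\<^bsub>AG\<^esub> inv\<^bsub>AG\<^esub> (T v x)"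
    by (rule conj_comm[OF endo_in_AG[OF inv_pair_sq] T_in[OF ok_v[OF g]] T_in[OF ok_v[OF gx']]])
       (simp add: q_conj[OF g] x'_def)
  also have "\<dots> = T v (x' @ inv_word x)"
    using T_inv[OF ok_v[OF g]] T_mult[OF ok_v[OF gx'] okTr_inv[OF ok_v[OF g]]] by simp
  finally show ?thesis unfolding N_def x'_def using gx' g x'_def by simp
qed

end

context setting
begin

definition P :: "nat \<Rightarrow> 'a word" where
  "P i = replicate i (u,True) @ W @ replicate i (u,False)"

definition Yw :: "nat \<Rightarrow> 'a word" where
  "Yw k = concat (map P [1..<Suc k])"

lemma Yw_0[simp]: "Yw 0 = []" by (simp add: Yw_def)
lemma Yw_Suc[simp]: "Yw (Suc k) = Yw k @ P (Suc k)" by (simp add: Yw_def)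

lemma good_P[simp]: "good (P i)" by (simp add: P_def)
lemma expsum_P: "expsum u (P i) = 0" "expsum w (P i) = int m"
  using uw by (auto simp: P_def)

lemma K_P: "K (P i)" by (simp add: K_def expsum_P)

lemma good_Yw[simp]: "good (Yw k)" by (induction k) auto
lemma expsum_Yw: "expsum u (Yw k) = 0" "expsum w (Yw k) = int k * int m"
  by (induction k) (auto simp: expsum_P algebra_simps)

lemma K_Yw: "K (Yw k)" by (simp add: K_def expsum_Yw)

lemma K_R: "K (P i @ replicate m (w,False))"
  using uw by (simp add: K_def expsum_P)

lemma N_Q: assumes nvu: "\<not> E v u" shows "N (P (Suc i) @ inv_word (P i))"
proof -
  have eq: "[(u,True)] @ P i @ [(u,False)] @ inv_word (P i) = P (Suc i) @ inv_word (P i)"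
    by (simp add: P_def replicate_app_Cons_same)
  have "N ([(u,True)] @ P i @ [(u,False)] @ inv_word (P i))" by (rule N_C[OF nvu K_P])
  from this[unfolded eq] show ?thesis .
qed

lemma N_R: assumes nvu: "\<not> E v u" shows "N (P i @ replicate m (w,False))"
proof (induction i)
  case 0
  have "N (W @ inv_word W)"
    by (rule N_cong[OF N_Nil]) (use R_sym[OF R_rinv[of W]] in auto)
  then show ?case by (simp add: P_def)
next
  case (Suc i)
  have "N ((P (Suc i) @ inv_word (P i)) @ (P i @ replicate m (w,False)))"
    by (rule N_app[OF N_Q[OF nvu] Suc])
  moreover have "(P (Suc i) @ inv_word (P i) @ P i @ replicate m (w,False), P (Suc i) @ replicate m (w,False)) \<in> R"
    by (rule R_cancel_gen')
  ultimately show ?case using N_cong by (simp add: P_def)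
qed

lemma N_X: assumes nvu: "\<not> E v u" shows "N (Yw k @ replicate (k*m) (w,False))"
proof (induction k)
  case 0 then show ?case by (simp add: N_Nil)
next
  case (Suc k)
  define Y where "Y = Yw k"
  define Rr where "Rr = P (Suc k) @ replicate m (w,False)"
  define Wk where "Wk = replicate (k*m) (w,False)"
  have gY: "good Y" "good Rr" "good Wk" by (simp_all add: Y_def Rr_def Wk_def)
  have a0: "N (Y @ Rr @ inv_word Y @ inv_word Rr)" unfolding Y_def Rr_def by (rule N_comm[OF K_Yw K_R])
  have a1: "N Rr" unfolding Rr_def by (rule N_R[OF nvu])
  have a2: "N (Y @ Wk)" using Suc by (simp add: Y_def Wk_def)
  have a: "N ((Y @ Rr @ inv_word Y @ inv_word Rr) @ Rr @ (Y @ Wk))" using N_app[OF a0 N_app[OF a1 a2]] .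
  have c1: "((Y @ Rr @ inv_word Y) @ inv_word Rr @ Rr @ (Y @ Wk), (Y @ Rr @ inv_word Y) @ (Y @ Wk)) \<in> R"
    by (rule R_cancel_gen')
  have b: "N ((Y @ Rr @ inv_word Y) @ (Y @ Wk))"
  proof (rule N_cong[OF a])
    show "good ((Y @ Rr @ inv_word Y) @ Y @ Wk)" using gY by simp
    show "((Y @ Rr @ inv_word Y @ inv_word Rr) @ Rr @ Y @ Wk, (Y @ Rr @ inv_word Y) @ Y @ Wk) \<in> R"
      using c1 by simp
  qed
  have c2: "((Y @ Rr) @ inv_word Y @ Y @ Wk, (Y @ Rr) @ Wk) \<in> R"
    by (rule R_cancel_gen')
  have "N (Y @ Rr @ Wk)"
  proof (rule N_cong[OF b])
    show "good (Y @ Rr @ Wk)" using gY by simp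
    show "((Y @ Rr @ inv_word Y) @ Y @ Wk, Y @ Rr @ Wk) \<in> R" using c2 by simp
  qed
  moreover have "Yw (Suc k) @ replicate (Suc k * m) (w,False) = Y @ Rr @ Wk"
    by (simp add: Y_def Rr_def Wk_def replicate_add)
  ultimately show ?case by simp
qed

lemma Z_Y: "(concat (replicate k ((u,True) # W)) @ replicate k (u,False), Yw k) \<in> R"
proof (induction k)
  case 0 then show ?case by simp
next
  case (Suc k)
  define A where "A = concat (replicate k ((u,True) # W))"
  define Rest where "Rest = (u,True) # W @ (u,False) # replicate k (u,False)"
  have IH: "(A @ replicate k (u,False), Yw k) \<in> R" using Suc A_def by simp
  have e1: "Yw (Suc k) = Yw k @ replicate k (u,True) @ Rest"
    by (simp add: Rest_def P_def replicate_app_Cons_same)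
  have 1: "(Yw k @ (replicate k (u,True) @ Rest), (A @ replicate k (u,False)) @ (replicate k (u,True) @ Rest)) \<in> R"
    by (rule R_app[OF R_sym[OF IH] R_refl])
  have 2: "(A @ inv_word (replicate k (u,True)) @ replicate k (u,True) @ Rest, A @ Rest) \<in> R"
    by (rule R_cancel_gen')
  have "(Yw (Suc k), A @ Rest) \<in> R" using R_trans[OF 1] 2 e1 by simp
  moreover have "concat (replicate (Suc k) ((u,True) # W)) @ replicate (Suc k) (u,False) = A @ Rest"
    unfolding concat_replicate_snoc by (simp add: A_def Rest_def)
  ultimately show ?case using R_sym by simp
qed

lemma N_Z: "N (concat (replicate m ((u,True) # W)) @ replicate m (u,False))"
proof -
  have k: "K (replicate m (u,True))" using uw by (simp add: K_def)
  have g: "good (replicate m (u,True))" by simp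
  have "subst_word (Tr u W) (replicate m (u,True)) = concat (replicate m ((u,True) # W))"
    by (simp add: subst_replicate Tr_def)
  then show ?thesis using N_B[OF g k] by simp
qed

lemma N_final_nc: assumes nvu: "\<not> E v u" shows "N (replicate (m*m) (w,True))"
proof -
  define Z where "Z = concat (replicate m ((u,True) # W)) @ replicate m (u,False)"
  have "N (inv_word Z @ (Yw m @ replicate (m*m) (w,False)))"
    by (rule N_app[OF N_inv N_X[OF nvu]]) (simp add: Z_def N_Z)
  moreover have "(inv_word Z @ (Yw m @ replicate (m*m) (w,False)), inv_word (Yw m) @ (Yw m @ replicate (m*m) (w,False))) \<in> R"
    by (rule R_app[OF R_inv[OF Z_Y[of m, folded Z_def]] R_refl])
  moreover have "([] @ inv_word (Yw m) @ Yw m @ replicate (m*m) (w,False), [] @ replicate (m*m) (w,False)) \<in> R"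
    by (rule R_cancel_gen')
  ultimately have "(inv_word Z @ (Yw m @ replicate (m*m) (w,False)), replicate (m*m) (w,False)) \<in> R"
    "N (inv_word Z @ (Yw m @ replicate (m*m) (w,False)))"
    using R_trans by auto
  then have "N (replicate (m*m) (w,False))"
    using N_cong by simp
  from N_inv[OF this] show ?thesis by simp
qed

lemma Zc: assumes euw: "E u w"
  shows "(concat (replicate k ((u,True) # W)), replicate (k*m) (w,True) @ replicate k (u,True)) \<in> R"
proof (induction k)
  case 0 then show ?case by simp
next
  case (Suc k)
  have 1: "([(u,True)] @ W @ concat (replicate k ((u,True) # W)), [(u,True)] @ W @ (replicate (k*m) (w,True) @ replicate k (u,True))) \<in> R"
    by (rule R_app[OF R_refl R_app[OF R_refl Suc]])
  have "([(u,True)] @ (W @ replicate (k*m) (w,True)), (W @ replicate (k*m) (w,True)) @ [(u,True)]) \<in> R"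
    by (rule letter_word_comm) (use euw in auto)
  then have 2: "(([(u,True)] @ (W @ replicate (k*m) (w,True))) @ replicate k (u,True),
                 ((W @ replicate (k*m) (w,True)) @ [(u,True)]) @ replicate k (u,True)) \<in> R"
    by (rule R_app[OF _ R_refl])
  have "(concat (replicate (Suc k) ((u,True) # W)), W @ replicate (k*m) (w,True) @ (u,True) # replicate k (u,True)) \<in> R"
    using R_trans[OF 1[simplified] 2[simplified]] by simp
  then show ?case by (simp add: replicate_add)
qed

lemma N_final_c: assumes euw: "E u w" shows "N (replicate (m*m) (w,True))"
proof -
  have 1: "(concat (replicate m ((u,True) # W)) @ replicate m (u,False),
            replicate (m*m) (w,True) @ replicate m (u,True) @ replicate m (u,False)) \<in> R"
    using R_app[OF Zc[OF euw, of m] R_refl[of "replicate m (u,False)"]] by simp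
  have 2: "(replicate (m*m) (w,True) @ replicate m (u,True) @ inv_word (replicate m (u,True)) @ [],
            replicate (m*m) (w,True) @ []) \<in> R"
    by (rule R_cancel_gen)
  have "(concat (replicate m ((u,True) # W)) @ replicate m (u,False), replicate (m*m) (w,True)) \<in> R"
    using R_trans[OF 1 2[simplified]] by simp
  then show ?thesis using N_cong[OF N_Z] by simp
qed

lemma final: "transvection E v w [^]\<^bsub>AG\<^esub> (m^2) \<in> SIA' E m"
proof -
  have nvu: "\<not> E u w \<Longrightarrow> \<not> E v u"
  proof
    assume n: "\<not> E u w" and evu: "E v u"
    have "v = w \<or> E v w" using dom_leD[OF duw symE[OF evu]] .
    then have "E v w" using vw by simp
    then have "w = u \<or> E w u" using dom_leD[OF dvu] by blast
    then show False using uw n symE by blast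
  qed
  have "N (replicate (m*m) (w,True))"
    using N_final_c N_final_nc nvu by blast
  then have "T v (replicate (m*m) (w,True)) \<in> D" by (simp add: N_def)
  moreover have "transvection E v w [^]\<^bsub>AG\<^esub> (m^2) = T v (replicate (m*m) (w,True))"
    unfolding transvection_T power2_eq_square by (rule T_pow[OF ok_v]) simp
  moreover have "D \<subseteq> SIA' E m"
    unfolding SIA'_def by (rule group.mono_derived[OF group_AG]) blast
  ultimately show ?thesis by auto
qed

end

theorem lemma3p8:
  fixes E :: "'v::finite \<Rightarrow> 'v \<Rightarrow> bool" and v w :: 'v and m :: nat
  assumes "simplicial_graph E"
    and "property_B2 E"
    and "v \<noteq> w" and "dom_le E v w"
  shows "transvection E v w [^]\<^bsub>AutoGroup (RAAG E)\<^esub> (m ^ 2) \<in> SIA' E m"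
proof -
  have r: "raag E"
    by (rule raag.intro) (use assms(1) in \<open>simp add: simplicial_graph_def\<close>)
  have "\<exists>u. u \<noteq> v \<and> u \<noteq> w \<and> dom_le E v u \<and> dom_le E u w"
    using assms(2,3,4) unfolding property_B2_def by blast
  then obtain u where u: "u \<noteq> v" "u \<noteq> w" "dom_le E v u" "dom_le E u w" by blast
  have s: "setting E v u w"
  proof (rule setting.intro[OF r], rule setting_axioms.intro)
    show "v \<noteq> u" using u(1) by simp
    show "v \<noteq> w" by (rule assms(3))
    show "u \<noteq> w" by (rule u(2))
    show "dom_le E v u" by (rule u(3))
    show "dom_le E v w" by (rule assms(4))
    show "dom_le E u w" by (rule u(4))
  qed
  show ?thesis by (rule setting.final[OF s])
qed

end
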